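(* Let $L^x,L^y>0$, let $i\neq j$ be two boxes, each box $k\in\{i,j\}$ having center $(c^x_k,c^y_k)$, side lengths $(\ell^x_k,\ell^y_k)$ and given constants $lb^s_k>0$. Let $$Q^{lb}=\{(c_i,c_j,\ell_i,\ell_j)\in\mathbb{R}^8:\ \tfrac12\ell^s_k\le c^s_k\le L^s-\tfrac12\ell^s_k,\ \ell^s_k\ge lb^s_k\ \ \forall s\in\{x,y\},k\in\{i,j\}\}.$$ Let $E$ be the set of $(c_i,c_j,\ell_i,\ell_j,w)\in\mathbb{R}^8\times\{0,1\}^2$ with $(c_i,c_j,\ell_i,\ell_j)\in Q^{lb}$ and such that: $w=(0,0)$ implies $\mathscr{B}_i\leftarrow_y\mathscr{B}_j$; $w=(1,0)$ implies $\mathscr{B}_i\leftarrow_x\mathscr{B}_j$; $w=(1,1)$ implies $\mathscr{B}_j\leftarrow_y\mathscr{B}_i$; $w=(0,1)$ implies $\mathscr{B}_j\leftarrow_x\mathscr{B}_i$. Then $E$ equals the set of $(c_i,c_j,\ell_i,\ell_j,w)$ satisfying \begin{align*} &\tfrac12\ell^s_p\le c^s_p\le L^s-\tfrac12\ell^s_p,\quad \ell^s_p\ge lb^s_p\qquad\forall s\in\{x,y\},p\in\{i,j\},\\ &c^y_i+\tfrac12\ell^y_i\le c^y_j-\tfrac12\ell^y_j+L^y(w_1+w_2),\\ &c^x_i+\tfrac12\ell^x_i\le c^x_j-\tfrac12\ell^x_j+L^x(1-w_1+w_2),\\ &c^y_j+\tfrac12\ell^y_j\le c^y_i-\tfrac12\ell^y_i+L^y(2-w_1-w_2),\\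 &c^x_j+\tfrac12\ell^x_j\le c^x_i-\tfrac12\ell^x_i+L^x(1+w_1-w_2),\\ &w\in\{0,1\}^2. \end{align*}
   Context: Box $\mathscr{B}_p$ precedes box $\mathscr{B}_q$ in direction $s\in\{x,y\}$, written $\mathscr{B}_p\leftarrow_s\mathscr{B}_q$, if $c^s_p+\tfrac12\ell^s_p\le c^s_q-\tfrac12\ell^s_q$. $E$ is the embedding $\operatorname{Em}(Q^{lb},D^4,GB^4)$ of the four-branch non-overlap disjunction with the two-bit Gray encoding. *)

theory Defs
  imports Complex_Main
begin

(* A point of R^8 is (c_i, c_j, l_i, l_j), each component a pair (x-coordinate, y-coordinate). *)
type_synonym pt2 = "real \<times> real"
type_synonym cfg = "pt2 \<times> pt2 \<times> pt2 \<times> pt2"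

datatype dir = DX | DY

fun coord :: "dir \<Rightarrow> pt2 \<Rightarrow> real" where
  "coord DX v = fst v"
| "coord DY v = snd v"

definition precedes :: "dir \<Rightarrow> pt2 \<Rightarrow> pt2 \<Rightarrow> pt2 \<Rightarrow> pt2 \<Rightarrow> bool" where
  "precedes s cp lp cq lq \<longleftrightarrow> coord s cp + coord s lp / 2 \<le> coord s cq - coord s lq / 2"

definition Qlb :: "pt2 \<Rightarrow> pt2 \<Rightarrow> pt2 \<Rightarrow> cfg set" where
  "Qlb L lbi lbj = {(ci, cj, li, lj). \<forall>s \<in> {DX, DY}.
      coord s li / 2 \<le> coord s ci \<and> coord s ci \<le> coord s L - coord s li / 2 \<and> coord s li \<ge> coord s lbi \<and>
      coord s lj / 2 \<le> coord s cj \<and> coord s cj \<le> coord s L - coord s lj / 2 \<and> coord s lj \<ge> coord s lbj}"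

definition bin2 :: "pt2 set" where
  "bin2 = {0, 1} \<times> {0, 1}"

definition Eset :: "pt2 \<Rightarrow> pt2 \<Rightarrow> pt2 \<Rightarrow> (cfg \<times> pt2) set" where
  "Eset L lbi lbj = {((ci, cj, li, lj), w). (ci, cj, li, lj) \<in> Qlb L lbi lbj \<and> w \<in> bin2 \<and>
      (w = (0, 0) \<longrightarrow> precedes DY ci li cj lj) \<and>
      (w = (1, 0) \<longrightarrow> precedes DX ci li cj lj) \<and>
      (w = (1, 1) \<longrightarrow> precedes DY cj lj ci li) \<and>
      (w = (0, 1) \<longrightarrow> precedes DX cj lj ci li)}"

end

theory Submission
  imports Defs
begin

theorem proposition5p2:
  fixes L lbi lbj :: "real \<times> real"
  assumes "fst L > 0" and "snd L > 0"
    and "fst lbi > 0" and "snd lbi > 0" and "fst lbj > 0" and "snd lbj > 0"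
  shows "Eset L lbi lbj =
    {((ci, cj, li, lj), (w1, w2)).
       (\<forall>s \<in> {DX, DY}.
          coord s li / 2 \<le> coord s ci \<and> coord s ci \<le> coord s L - coord s li / 2 \<and> coord s li \<ge> coord s lbi \<and>
          coord s lj / 2 \<le> coord s cj \<and> coord s cj \<le> coord s L - coord s lj / 2 \<and> coord s lj \<ge> coord s lbj) \<and>
       snd ci + snd li / 2 \<le> snd cj - snd lj / 2 + snd L * (w1 + w2) \<and>
       fst ci + fst li / 2 \<le> fst cj - fst lj / 2 + fst L * (1 - w1 + w2) \<and>
       snd cj + snd lj / 2 \<le> snd ci - snd li / 2 + snd L * (2 - w1 - w2) \<and>
       fst cj + fst lj / 2 \<le> fst ci - fst li / 2 + fst L * (1 + w1 - w2) \<and>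
       (w1, w2) \<in> bin2}"
proof (rule set_eqI)
  fix z :: "cfg \<times> pt2"
  obtain ci cj li lj w1 w2 where z: "z = ((ci,cj,li,lj),(w1,w2))" by (metis prod.exhaust)
  obtain a1 a2 where ci: "ci = (a1,a2)" by fastforce
  obtain b1 b2 where cj: "cj = (b1,b2)" by fastforce
  obtain d1 d2 where li: "li = (d1,d2)" by fastforce
  obtain e1 e2 where lj: "lj = (e1,e2)" by fastforce
  obtain L1 L2 where LL: "L = (L1,L2)" by fastforce
  show "z \<in> Eset L lbi lbj \<longleftrightarrow> z \<in> {((ci, cj, li, lj), (w1, w2)).
       (\<forall>s \<in> {DX, DY}.
          coord s li / 2 \<le> coord s ci \<and> coord s ci \<le> coord s L - coord s li / 2 \<and> coord s li \<ge> coord s lbi \<and>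
          coord s lj / 2 \<le> coord s cj \<and> coord s cj \<le> coord s L - coord s lj / 2 \<and> coord s lj \<ge> coord s lbj) \<and>
       snd ci + snd li / 2 \<le> snd cj - snd lj / 2 + snd L * (w1 + w2) \<and>
       fst ci + fst li / 2 \<le> fst cj - fst lj / 2 + fst L * (1 - w1 + w2) \<and>
       snd cj + snd lj / 2 \<le> snd ci - snd li / 2 + snd L * (2 - w1 - w2) \<and>
       fst cj + fst lj / 2 \<le> fst ci - fst li / 2 + fst L * (1 + w1 - w2) \<and>
       (w1, w2) \<in> bin2}"
  proof (cases "(w1,w2) \<in> bin2")
    case False
    then show ?thesis unfolding z Eset_def by auto
  next
    case True
    then have W: "(w1=0 \<and> w2=0) \<or> (w1=1 \<and> w2=0) \<or> (w1=1 \<and> w2=1) \<or> (w1=0 \<and> w2=1)"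
      unfolding bin2_def by auto
    show ?thesis
      using W True assms unfolding z ci cj li lj LL Eset_def Qlb_def precedes_def
      by (elim disjE; simp; linarith)
  qed
qed

end
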